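(* Consider the algorithm described in the context, suppose it does not terminate finitely, and suppose there is $\sigma_{\min}>0$ with $\sigma_{\min}(J_k)\ge\sigma_{\min}$ for all $k\in\mathbb{N}$. Then for all $k\in\mathbb{N}$, $\tau_{k,\mathrm{trial}}\ge\tau_{\min,\mathrm{trial}}$, where, with $K:=2\kappa_v\kappa_{\nabla c}\big(\kappa_{\nabla f}+\kappa_{\partial r}+\bar\sigma_u\kappa_c\kappa_v\kappa_{\nabla c}\big)$, $$\tau_{\min,\mathrm{trial}}:=\min\Big\{\frac{(1-\sigma_c)\kappa_v\sigma_{\min}^2}{K},\ \frac{(1-\sigma_c)(\sigma_{\min}/\kappa_{\nabla c})^2}{K\alpha_0}\Big\},$$ and consequently $\tau_k\ge\tau_{\min}:=\min\{\tau_0,(1-\epsilon_\tau)\tau_{\min,\mathrm{trial}}\}$ for all $k\in\mathbb{N}$.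
   Context: Problem: $\min_{x\in\mathbb{R}^n} f(x)+r(x)$ subject to $c(x)=0$, where $f:\mathbb{R}^n\to\mathbb{R}$ and $c:\mathbb{R}^n\to\mathbb{R}^m$ ($m\le n$) are continuously differentiable and $r:\mathbb{R}^n\to\mathbb{R}_{\ge 0}$ is convex. Write $g(x)=\nabla f(x)$, $J(x)=\nabla c(x)^T$, and $f_k=f(x_k)$, $g_k=g(x_k)$, $c_k=c(x_k)$, $J_k=J(x_k)$, $r_k=r(x_k)$. All norms are Euclidean (spectral norm for matrices). Merit function: $\Phi_\tau(x)=\tau(f(x)+r(x))+\|c(x)\|_2$. Algorithm: inputs $x_0$, $\alpha_0>0$, $\tau_{-1}>0$; constants $\kappa_v>0$, $\sigma_c,\epsilon_\tau,\xi,\eta\in(0,1)$, $\sigma_u\in(0,1/2]$, $\bar\sigma_u:=\sigma_u+\tfrac12$. For $k=0,1,\dots$: 1. If $J_k^Tc_k\ne0$, compute $v_k$ with $v_k\in\mathrm{Range}(J_k^T)$, $\|v_k\|_2\le\kappa_v\alpha_k\|J_k^Tc_k\|_2$, $\|c_k+J_kv_k\|_2\le\|c_k+J_kv_k^c\|_2$, where $v_k^c=-\beta_k^cJ_k^Tc_k$ with $\beta_k^c$ minimizing $\tfrac12\|c_k-\beta J_kJ_k^Tc_k\|_2^2$ over $0\le\beta\le\kappa_v\alpha_k$. Otherwise set $v_k=0$, and if $c_k\ne0$ terminate. 2. Let $u_k$ be the unique minimizer of $g_k^Tu+\tfrac1{2\alpha_k}\|u\|_2^2+r(x_k+v_k+u)$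 subject to $J_ku=0$; set $s_k=v_k+u_k$. If $s_k=0$, terminate. 3. Let $D_k:=g_k^Ts_k+\bar\sigma_u\|s_k\|_2^2/\alpha_k+r(x_k+s_k)-r_k$; $\tau_{k,\mathrm{trial}}=\infty$ if $D_k\le0$, else $\tau_{k,\mathrm{trial}}=(1-\sigma_c)(\|c_k\|_2-\|c_k+J_kv_k\|_2)/D_k$. Set $\tau_k=\tau_{k-1}$ if $\tau_{k-1}\le\tau_{k,\mathrm{trial}}$, else $\tau_k=\min\{(1-\epsilon_\tau)\tau_{k-1},\tau_{k,\mathrm{trial}}\}$. 4. With $\Delta q_k(s,\tau):=-\tau(g_k^Ts+\tfrac1{2\alpha_k}\|s\|_2^2+r(x_k+s)-r_k)+\|c_k\|_2-\|c_k+J_ks\|_2$: if $\Phi_{\tau_k}(x_k+s_k)\le\Phi_{\tau_k}(x_k)-\eta\Delta q_k(s_k,\tau_k)$ set $x_{k+1}=x_k+s_k$, $\alpha_{k+1}=\alpha_k$; else $x_{k+1}=x_k$, $\alpha_{k+1}=\xi\alpha_k$. Standing assumption: there is an open convex set $\mathcal X$ containing all iterates $x_k$ and trial points $x_k+s_k$, and positive constants such that for all $x\in\mathcal X$: $f$ is bounded below, $\|\nabla f(x)\|_2\le\kappa_{\nabla f}$, $\|c(x)\|_2\le\kappa_c$, $\|J(x)\|_2\le\kappa_{\nabla c}$, every $w\in\partial r(x)$ has $\|w\|_2\le\kappa_{\partial r}$; and $\nabla f$, $J$ are Lipschitz continuous on $\mathcal X$. *)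

theory Defs
  imports "HOL-Analysis.Analysis"
begin

definition subdiff :: "('a::real_inner \<Rightarrow> real) \<Rightarrow> 'a \<Rightarrow> 'a set" where
  "subdiff r x = {w. \<forall>y. r x + inner w (y - x) \<le> r y}"

definition spec_norm :: "real^'n^'m \<Rightarrow> real" where
  "spec_norm A = onorm (\<lambda>h. A *v h)"

text \<open>Smallest singular value of an m x n matrix A with m \<le> n, i.e. the square root of
  the smallest eigenvalue of A A^T, written variationally as min over unit y of norm (A^T y).\<close>
definition sigma_min_sv :: "real^'n^'m \<Rightarrow> real" where
  "sigma_min_sv A = Inf {norm (transpose A *v y) | y. norm y = 1}"

definition merit :: "(real^'n \<Rightarrow> real) \<Rightarrow> (real^'n \<Rightarrow> real) \<Rightarrow> (real^'n \<Rightarrow> real^'m)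
    \<Rightarrow> real \<Rightarrow> real^'n \<Rightarrow> real" where
  "merit f r c tau x = tau * (f x + r x) + norm (c x)"

definition Dval :: "real^'n \<Rightarrow> (real^'n \<Rightarrow> real) \<Rightarrow> real \<Rightarrow> real \<Rightarrow> real^'n \<Rightarrow> real^'n \<Rightarrow> real" where
  "Dval gk r sbar alpha xk s = inner gk s + sbar * (norm s)^2 / alpha + r (xk + s) - r xk"

definition tau_trial_val :: "real \<Rightarrow> real^'m \<Rightarrow> real^'n^'m \<Rightarrow> real^'n \<Rightarrow> real \<Rightarrow> ereal" where
  "tau_trial_val sigc ck Jk vk D =
     (if D \<le> 0 then \<infinity> else ereal ((1 - sigc) * (norm ck - norm (ck + Jk *v vk)) / D))"

definition dq :: "real^'n \<Rightarrow> (real^'n \<Rightarrow> real) \<Rightarrow> real \<Rightarrow> real^'n \<Rightarrow> real^'m \<Rightarrow> real^'n^'m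
    \<Rightarrow> real^'n \<Rightarrow> real \<Rightarrow> real" where
  "dq gk r alpha xk ck Jk s tau =
     - tau * (inner gk s + (norm s)^2 / (2 * alpha) + r (xk + s) - r xk)
     + norm ck - norm (ck + Jk *v s)"

end

theory Submission
  imports Defs
begin


lemma subgrad_exists:
  fixes r :: "'a::euclidean_space \<Rightarrow> real"
  assumes cv: "convex_on UNIV r"
  shows "\<exists>w. \<forall>y. r p + inner w (y - p) \<le> r y"
proof -
  define S where "S = {z::'a \<times> real. r (fst z) \<le> snd z}"
  define T where "T = {z::'a \<times> real. fst z = p \<and> snd z < r p}"
  have cS: "convex S"
    using convex_epigraphI[OF cv] unfolding S_def epigraph_def by simp
  have cT: "convex T"
  proof (rule convexI)
    fix x y :: "'a \<times> real" and u v :: real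
    assume h: "x \<in> T" "y \<in> T" "0 \<le> u" "0 \<le> v" "u + v = 1"
    have "u *\<^sub>R fst x + v *\<^sub>R fst y = p" using h by (simp add: T_def scaleR_left_distrib[symmetric])
    moreover have "u * snd x + v * snd y < r p" using h convex_bound_lt[of "snd x" "r p" "snd y" u v] by (simp add: T_def)
    ultimately show "u *\<^sub>R x + v *\<^sub>R y \<in> T" by (simp add: T_def)
  qed
  have "(p, r p) \<in> S" by (simp add: S_def)
  then have "S \<noteq> {}" by blast
  moreover have "(p, r p - 1) \<in> T" by (simp add: T_def)
  then have "T \<noteq> {}" by blast
  moreover have "S \<inter> T = {}" unfolding S_def T_def by auto
  ultimately obtain z b where z: "z \<noteq> 0" and zS: "\<forall>x\<in>S. inner z x \<le> b"
      and zT: "\<forall>x\<in>T. inner z x \<ge> b"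
    using separating_hyperplane_sets[OF cS cT] by blast
  obtain a a0 where zab: "z = (a, a0)" by (cases z)
  have S': "inner a y + a0 * t \<le> b" if "r y \<le> t" for y t
    using zS that unfolding S_def zab by auto
  have T': "b \<le> inner a p + a0 * t" if "t < r p" for t
    using zT that unfolding T_def zab by auto
  have "a0 \<le> 0"
    using S'[of p "r p"] T'[of "r p - 1"] by (simp add: algebra_simps)
  moreover have "a0 \<noteq> 0"
  proof
    assume h: "a0 = 0"
    have "inner a (p + a) \<le> inner a p"
      using S'[of "p + a" "r (p+a)"] T'[of "r p - 1"] h by simp
    then have "inner a a \<le> 0" by (simp add: inner_add_right)
    then have "a = 0" by (meson inner_gt_zero_iff not_le)
    with h zab z show False by (simp add: zero_prod_def)
  qed
  ultimately have a0n: "a0 < 0" by simp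
  have key: "inner a y + a0 * r y \<le> inner a p + a0 * r p" for y
  proof (rule field_le_epsilon)
    fix e :: real assume e: "e > 0"
    have "inner a y + a0 * r y \<le> inner a p + a0 * (r p - e / (- a0))"
    proof -
      have "e / (- a0) > 0" using e a0n by (intro divide_pos_pos) auto
      then have "r p - e / (- a0) < r p" by simp
      then show ?thesis using S'[of y "r y"] T'[of "r p - e / (- a0)"] by simp
    qed
    also have "\<dots> = inner a p + a0 * r p + e" using a0n by (simp add: field_simps)
    finally show "inner a y + a0 * r y \<le> inner a p + a0 * r p + e" .
  qed
  show ?thesis
  proof (intro exI allI)
    fix y
    have "r p + inner ((-1/a0) *\<^sub>R a) (y - p) = r p - (inner a y - inner a p) / a0"
      by (simp add: inner_diff_right diff_divide_distrib)
    also have "\<dots> \<le> r y"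
      using key[of y] a0n by (simp add: field_simps)
    finally show "r p + inner ((-1/a0) *\<^sub>R a) (y - p) \<le> r y" .
  qed
qed

lemma le_limit_t:
  fixes D A B t0 :: real
  assumes "t0 > 0" "\<And>t. 0 < t \<Longrightarrow> t \<le> t0 \<Longrightarrow> D \<le> A + t * B"
  shows "D \<le> A"
proof (rule field_le_epsilon)
  fix e :: real assume e: "e > 0"
  define t where "t = min t0 (e / (\<bar>B\<bar> + 1))"
  have t: "0 < t" "t \<le> t0" using assms e by (auto simp: t_def)
  have "t * B \<le> t * \<bar>B\<bar>" using t by (simp add: mult_left_mono)
  also have "\<dots> \<le> e / (\<bar>B\<bar> + 1) * \<bar>B\<bar>" using t by (intro mult_right_mono) (auto simp: t_def)
  also have "\<dots> \<le> e" using e by (simp add: field_simps)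
  finally show "D \<le> A + e" using assms(2)[OF t] by simp
qed

lemma transp_inner:
  fixes A :: "real^'n^'m"
  shows "inner (transpose A *v y) z = inner y (A *v z)"
  by (metis dot_lmul_matrix transpose_transpose vector_transpose_matrix)



lemma Dbound:
  fixes r :: "real^'n \<Rightarrow> real" and J :: "real^'n^'m"
  assumes cv: "convex_on UNIV r" and oX: "open X" and pX: "x + (v + u) \<in> X"
    and al: "alpha > 0" and sb: "sb \<le> 1"
    and subbd: "\<And>y w. y \<in> X \<Longrightarrow> w \<in> subdiff r y \<Longrightarrow> norm w \<le> kr"
    and vr: "v = transpose J *v y0" and Ju: "J *v u = 0"
    and opt: "\<forall>w. J *v w = 0 \<longrightarrow>
            inner g u + (norm u)^2 / (2 * alpha) + r (x + v + u)
            \<le> inner g w + (norm w)^2 / (2 * alpha) + r (x + v + w)"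
  shows "Dval g r sb alpha x (v + u) \<le> inner g v + kr * norm v + sb * (norm v)^2 / alpha"
proof -
  define p where "p = x + (v + u)"
  have vu: "inner v u = 0" using vr Ju transp_inner[of J y0 u] by simp
  have ns: "(norm (v + u))^2 = (norm v)^2 + (norm u)^2"
    using vu by (simp add: power2_norm_eq_inner inner_add_left inner_add_right inner_commute)
  obtain e where e: "e > 0" "ball p e \<subseteq> X" using oX pX p_def open_contains_ball by blast
  define t0 where "t0 = min 1 (e / (norm u + 1))"
  have t0: "t0 > 0" using e by (auto simp: t0_def intro!: divide_pos_pos add_nonneg_pos)
  have rb: "r p - r x \<le> - inner g u - (norm u)^2 / alpha + kr * norm v + t * ((norm u)^2 / (2*alpha))"
    if t: "0 < t" "t \<le> t0" for t
  proof -
    have t1: "t \<le> 1" using t t0_def by simp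
    define q where "q = p - t *\<^sub>R u"
    have "norm (t *\<^sub>R u) < e"
    proof -
      have "norm (t *\<^sub>R u) = t * norm u" using t by simp
      also have "\<dots> \<le> e / (norm u + 1) * norm u" using t unfolding t0_def
        by (intro mult_right_mono) auto
      also have "\<dots> = e * (norm u / (norm u + 1))" by simp
      also have "\<dots> < e"
      proof -
        have d: "norm u + 1 > 0" by (simp add: add_nonneg_pos)
        have "norm u / (norm u + 1) < 1" using d by simp
        then have "e * (norm u / (norm u + 1)) < e * 1" using e by (intro mult_strict_left_mono) auto
        then show ?thesis by simp
      qed
      finally show ?thesis .
    qed
    then have qX: "q \<in> X" using e unfolding q_def by (auto simp: dist_norm)
    have "J *v ((1 - t) *\<^sub>R u) = 0" using Ju by (simp add: matrix_vector_mult_scaleR)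
    then have o1: "inner g u + (norm u)^2 / (2 * alpha) + r p
        \<le> inner g ((1 - t) *\<^sub>R u) + (norm ((1 - t) *\<^sub>R u))^2 / (2 * alpha) + r q"
    proof -
      have "inner g u + (norm u)^2 / (2 * alpha) + r (x + v + u)
        \<le> inner g ((1 - t) *\<^sub>R u) + (norm ((1 - t) *\<^sub>R u))^2 / (2 * alpha) + r (x + v + (1 - t) *\<^sub>R u)"
        using opt \<open>J *v ((1 - t) *\<^sub>R u) = 0\<close> by blast
      moreover have "x + v + u = p" unfolding p_def by (simp add: algebra_simps)
      moreover have "x + v + (1 - t) *\<^sub>R u = q" unfolding p_def q_def by (simp add: algebra_simps)
      ultimately show ?thesis by simp
    qed
    have n1: "(norm ((1 - t) *\<^sub>R u))^2 = (1 - t)^2 * (norm u)^2"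
      using t1 by (simp add: power_mult_distrib)
    have o1': "r p - r q \<le> - t * inner g u - (2 * t - t^2) * ((norm u)^2 / (2 * alpha))"
    proof -
      define Z where "Z = (norm u)^2 / (2 * alpha)"
      have m: "(norm ((1 - t) *\<^sub>R u))^2 / (2 * alpha) = (1 - t)^2 * Z"
        unfolding n1 Z_def by simp
      have ig: "inner g ((1 - t) *\<^sub>R u) = (1 - t) * inner g u" by simp
      have "inner g u + Z + r p \<le> (1 - t) * inner g u + (1 - t)^2 * Z + r q"
        using o1 unfolding m ig Z_def[symmetric] .
      then show ?thesis unfolding Z_def[symmetric] by (simp add: algebra_simps power2_eq_square)
    qed
    obtain w where w: "\<forall>y. r q + inner w (y - q) \<le> r y" using subgrad_exists[OF cv] by blast
    have "norm w \<le> kr" using subbd[OF qX] w unfolding subdiff_def by auto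
    have o2a: "r q + inner w ((q - t *\<^sub>R v) - q) \<le> r (q - t *\<^sub>R v)" using w by blast
    have "inner w ((q - t *\<^sub>R v) - q) = - t * inner w v" by simp
    moreover have "\<bar>inner w v\<bar> \<le> kr * norm v"
      using Cauchy_Schwarz_ineq2[of w v] \<open>norm w \<le> kr\<close>
      by (meson mult_right_mono norm_ge_zero order_trans)
    note facts = this
    have o2: "r q - r (q - t *\<^sub>R v) \<le> t * (kr * norm v)"
    proof -
      have iw: "inner w v \<le> kr * norm v" using \<open>\<bar>inner w v\<bar> \<le> kr * norm v\<close> by linarith
      have "t * inner w v \<le> t * (kr * norm v)" using iw t by (intro mult_left_mono) auto
      then show ?thesis using o2a \<open>inner w ((q - t *\<^sub>R v) - q) = - t * inner w v\<close> by linarith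
    qed
    have eqv: "q - t *\<^sub>R v = (1 - t) *\<^sub>R p + t *\<^sub>R x"
      unfolding q_def p_def by (simp add: algebra_simps)
    have o3: "r (q - t *\<^sub>R v) \<le> (1 - t) * r p + t * r x"
      unfolding eqv using convex_onD[OF cv, of t p x] t t1 by simp
    have "t * (r p - r x) \<le> t * (- inner g u - (2 - t) * ((norm u)^2 / (2 * alpha)) + kr * norm v)"
      using o1' o2 o3 by (simp add: algebra_simps power2_eq_square)
    then have "r p - r x \<le> - inner g u - (2 - t) * ((norm u)^2 / (2 * alpha)) + kr * norm v"
      using t by simp
    moreover have "(2 - t) * ((norm u)^2 / (2 * alpha)) = (norm u)^2 / alpha - t * ((norm u)^2 / (2*alpha))"
      using al by (simp add: field_simps)
    ultimately show ?thesis by simp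
  qed
  have "Dval g r sb alpha x (v + u) \<le> (inner g v + kr * norm v + sb * (norm v)^2 / alpha) + t * ((norm u)^2 / (2*alpha))"
    if t: "0 < t" "t \<le> t0" for t
  proof -
    have "Dval g r sb alpha x (v + u) = inner g v + inner g u + sb * (norm v)^2 / alpha + sb * (norm u)^2 / alpha + (r p - r x)"
      unfolding Dval_def p_def ns by (simp add: inner_add_right add_divide_distrib algebra_simps)
    moreover have "sb * (norm u)^2 / alpha \<le> (norm u)^2 / alpha"
    proof -
      have "(1 - sb) * (norm u)^2 \<ge> 0" using sb by simp
      then have "sb * (norm u)^2 \<le> (norm u)^2" by (simp add: algebra_simps)
      then show ?thesis using al by (intro divide_right_mono) auto
    qed
    ultimately show ?thesis using rb[OF t] by simp
  qed
  then show ?thesis using le_limit_t[OF t0] by blast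
qed



lemma Nbound:
  fixes J :: "real^'n^'m" and c :: "real^'m"
  assumes jc: "transpose J *v c \<noteq> 0" and kJ: "\<And>h. norm (J *v h) \<le> kJ * norm h" and kJp: "kJ > 0"
    and B: "B > 0" and bc0: "0 \<le> bc" and bcB: "bc \<le> B"
    and bcmin: "\<forall>b. 0 \<le> b \<and> b \<le> B \<longrightarrow>
        (1/2) * (norm (c - bc *\<^sub>R (J *v (transpose J *v c))))^2
        \<le> (1/2) * (norm (c - b *\<^sub>R (J *v (transpose J *v c))))^2"
    and nv: "norm (c + J *v v) \<le> norm (c + J *v (- (bc *\<^sub>R (transpose J *v c))))"
  shows "norm c - norm (c + J *v v) \<ge> (norm (transpose J *v c))^2 * min (1/kJ^2) B / (2 * norm c)"
proof -
  define w where "w = J *v (transpose J *v c)"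
  define a where "a = norm (transpose J *v c)"
  define b where "b = norm w"
  define m where "m = min (1/kJ^2) B"
  have ap: "a > 0" using jc a_def by simp
  have cw: "inner c w = a^2" unfolding w_def a_def
    using transp_inner[of J c "transpose J *v c"] by (simp add: power2_norm_eq_inner)
  have ba: "b \<le> kJ * a" unfolding b_def w_def a_def by (rule kJ)
  have bp: "b > 0"
  proof (rule ccontr)
    assume "\<not> b > 0" then have "w = 0" using b_def by simp
    then show False using cw ap by simp
  qed
  have cnz: "c \<noteq> 0" using jc by auto
  define beta where "beta = min (a^2/b^2) B"
  have beta0: "0 \<le> beta" "beta \<le> B" using B bp by (auto simp: beta_def)
  have bb: "beta * b^2 \<le> a^2" using bp by (simp add: beta_def min_def field_simps split: if_splits)
  have "(norm (c - beta *\<^sub>R w))^2 = (norm c)^2 - 2 * beta * a^2 + beta^2 * b^2"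
  proof -
    have "(norm (c - beta *\<^sub>R w))^2 = inner (c - beta *\<^sub>R w) (c - beta *\<^sub>R w)"
      by (rule power2_norm_eq_inner)
    also have "\<dots> = inner c c - 2 * beta * inner c w + beta^2 * inner w w"
      by (simp add: inner_diff_left inner_diff_right inner_commute algebra_simps power2_eq_square)
    finally show ?thesis unfolding cw b_def power2_norm_eq_inner .
  qed
  also have "\<dots> \<le> (norm c)^2 - beta * a^2"
  proof -
    have "beta * (beta * b^2) \<le> beta * a^2" using bb beta0 by (intro mult_left_mono) auto
    then have "beta^2 * b^2 \<le> beta * a^2" by (simp add: power2_eq_square mult.assoc)
    then show ?thesis by simp
  qed
  finally have e1: "(norm (c - beta *\<^sub>R w))^2 \<le> (norm c)^2 - beta * a^2" .
  have "b^2 \<le> kJ^2 * a^2" using ba bp by (metis power_mono power_mult_distrib less_imp_le)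
  then have "1/kJ^2 \<le> a^2/b^2" using bp kJp by (simp add: field_simps)
  then have mb: "m \<le> beta" unfolding m_def beta_def by auto
  have "a^2 * m \<le> a^2 * beta" using mb by (simp add: mult_left_mono)
  have eq: "c + J *v (- (bc *\<^sub>R (transpose J *v c))) = c - bc *\<^sub>R w"
  proof -
    have neg: "J *v (- y) = - (J *v y)" for y using matrix_vector_mult_scaleR[of J "-1" y] by simp
    show ?thesis unfolding w_def neg by (simp add: matrix_vector_mult_scaleR)
  qed
  define P where "P = norm (c + J *v v)"
  have P0: "P \<ge> 0" unfolding P_def by simp
  have "P^2 \<le> (norm (c - bc *\<^sub>R w))^2" using nv eq P0 unfolding P_def by (simp add: power_mono)
  also have "\<dots> \<le> (norm (c - beta *\<^sub>R w))^2" using bcmin beta0 unfolding w_def by auto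
  finally have P2: "P^2 \<le> (norm c)^2 - a^2 * m" using e1 \<open>a^2 * m \<le> a^2 * beta\<close> by (simp add: mult.commute)
  have m0: "m \<ge> 0" unfolding m_def using B by simp
  have "a^2 * m \<ge> 0" using m0 by simp
  then have "P^2 \<le> (norm c)^2" using P2 by linarith
  then have Pc: "P \<le> norm c" using P0 by (meson norm_ge_zero power2_le_imp_le)
  have nc: "norm c > 0" using cnz by simp
  have "(norm c)^2 - P^2 = (norm c - P) * (norm c + P)" by (simp add: power2_eq_square algebra_simps)
  also have "\<dots> \<le> (norm c - P) * (2 * norm c)" using Pc by (intro mult_left_mono) auto
  finally have "a^2 * m \<le> (norm c - P) * (2 * norm c)" using P2 by simp
  then have "a^2 * m / (2 * norm c) \<le> norm c - P" using nc by (simp add: divide_le_eq)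
  then show ?thesis unfolding P_def a_def m_def by simp
qed



lemma Tarith:
  fixes N D a nc nv al al0 kf kr kv kJ kc sb sigc smin :: real
  assumes pos: "kf > 0" "kr > 0" "kv > 0" "kJ > 0" "kc > 0" "sb > 0" "0 < sigc" "sigc < 1"
    and sm: "smin > 0" "smin \<le> kJ" and al: "al > 0" "al \<le> al0"
    and a: "a > 0" "nc > 0" "a \<ge> smin * nc" "a \<le> kJ * kc"
    and nv: "nv \<ge> 0" "nv \<le> kv * al * a"
    and D: "D \<le> (kf + kr) * nv + sb * nv^2 / al" "D > 0"
    and N: "N \<ge> a^2 * min (1/kJ^2) (kv * al) / (2 * nc)"
  shows "(1 - sigc) * N / D \<ge> min ((1 - sigc) * kv * smin^2 / (2 * kv * kJ * (kf + kr + sb * kc * kv * kJ)))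
            ((1 - sigc) * (smin / kJ)^2 / ((2 * kv * kJ * (kf + kr + sb * kc * kv * kJ)) * al0))"
proof -
  define M where "M = kf + kr + sb * kc * kv * kJ"
  define m where "m = min (1/kJ^2) (kv * al)"
  have Mp: "M > 0" unfolding M_def using pos by (simp add: add_pos_pos)
  have mp: "m > 0" unfolding m_def using pos al by simp
  have "(kf + kr) * nv \<le> (kf + kr) * (kv * al * a)" using nv pos by (intro mult_left_mono) auto
  moreover have "sb * nv^2 / al \<le> sb * (kv * al * a)^2 / al"
    using nv pos al by (intro divide_right_mono mult_left_mono power_mono) auto
  moreover have "sb * (kv * al * a)^2 / al = kv * al * a * (sb * kv * a)"
    using al by (simp add: power2_eq_square field_simps)
  moreover have "kv * al * a * (sb * kv * a) \<le> kv * al * a * (sb * kv * (kJ * kc))"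
    using a pos al by (intro mult_left_mono) auto
  ultimately have DM: "D \<le> kv * al * a * M" using D unfolding M_def by (simp add: algebra_simps)
  have N0: "N \<ge> a^2 * m / (2 * nc)" using N unfolding m_def .
  have N0': "a^2 * m / (2 * nc) > 0" using a mp by simp
  have "(1 - sigc) * N / D \<ge> (1 - sigc) * N / (kv * al * a * M)"
    using D DM N0 N0' pos al a Mp by (intro divide_left_mono mult_nonneg_nonneg mult_pos_pos) auto
  moreover have "(1 - sigc) * N / (kv * al * a * M) \<ge> (1 - sigc) * (a^2 * m / (2 * nc)) / (kv * al * a * M)"
    using N0 pos al a Mp by (intro divide_right_mono mult_left_mono) auto
  moreover have "(1 - sigc) * (a^2 * m / (2 * nc)) / (kv * al * a * M) = (1 - sigc) * m / (2 * kv * al * M) * (a / nc)"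
    using a pos al Mp by (simp add: power2_eq_square field_simps)
  moreover have "(1 - sigc) * m / (2 * kv * al * M) * (a / nc) \<ge> (1 - sigc) * m / (2 * kv * al * M) * smin"
    using a pos al Mp mp by (intro mult_left_mono) (auto simp: pos_le_divide_eq)
  ultimately have Q: "(1 - sigc) * N / D \<ge> (1 - sigc) * m / (2 * kv * al * M) * smin" by linarith
  have "(1 - sigc) * m / (2 * kv * al * M) * smin \<ge>
      min ((1 - sigc) * kv * smin^2 / (2 * kv * kJ * M)) ((1 - sigc) * (smin / kJ)^2 / ((2 * kv * kJ * M) * al0))"
  proof (cases "kv * al \<le> 1/kJ^2")
    case True
    then have "m = kv * al" unfolding m_def by simp
    then have "(1 - sigc) * m / (2 * kv * al * M) * smin = (1 - sigc) * smin / (2 * M)"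
      using pos al Mp by (simp add: field_simps)
    moreover have "(1 - sigc) * kv * smin^2 / (2 * kv * kJ * M) = (1 - sigc) * smin / (2 * M) * (smin / kJ)"
      using pos Mp al by (simp add: field_simps power2_eq_square)
    moreover have "(1 - sigc) * smin / (2 * M) * (smin / kJ) \<le> (1 - sigc) * smin / (2 * M)"
      using pos sm Mp by (intro mult_left_le) auto
    ultimately show ?thesis by linarith
  next
    case False
    then have meq: "m = 1 / kJ^2" unfolding m_def by simp
    have "(1 - sigc) * m / (2 * kv * al * M) * smin = (1 - sigc) * smin / (2 * kv * kJ^2 * M * al)"
      unfolding meq using pos al Mp by (simp add: field_simps)
    moreover have "(1 - sigc) * (smin / kJ)^2 / ((2 * kv * kJ * M) * al0) = (1 - sigc) * smin / (2 * kv * kJ^2 * M * al0) * (smin / kJ)"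
      using pos Mp al by (simp add: field_simps power2_eq_square)
    moreover have "(1 - sigc) * smin / (2 * kv * kJ^2 * M * al0) * (smin / kJ) \<le> (1 - sigc) * smin / (2 * kv * kJ^2 * M * al0)"
      using pos sm Mp al by (intro mult_left_le) auto
    moreover have "(1 - sigc) * smin / (2 * kv * kJ^2 * M * al0) \<le> (1 - sigc) * smin / (2 * kv * kJ^2 * M * al)"
      using pos sm Mp al by (intro divide_left_mono mult_pos_pos mult_left_mono) auto
    ultimately show ?thesis by linarith
  qed
  then show ?thesis using Q unfolding M_def by linarith
qed


theorem lemma3p13:
  fixes f r :: "real^'n \<Rightarrow> real"
    and g :: "real^'n \<Rightarrow> real^'n"
    and c :: "real^'n \<Rightarrow> real^'m"
    and J :: "real^'n \<Rightarrow> real^'n^'m"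
    and x v u :: "nat \<Rightarrow> real^'n"
    and alpha tau :: "nat \<Rightarrow> real"
    and tau_m1 kv sigc epst xi eta sigu kf kc kJ kr smin :: real
    and X :: "(real^'n) set"
  assumes mn: "CARD('m) \<le> CARD('n)"
    and f_deriv: "\<And>y. (f has_derivative (\<lambda>h. inner (g y) h)) (at y)"
    and g_cont: "continuous_on UNIV g"
    and c_deriv: "\<And>y. (c has_derivative (\<lambda>h. J y *v h)) (at y)"
    and J_cont: "continuous_on UNIV J"
    and r_convex: "convex_on UNIV r"
    and r_nonneg: "\<And>y. r y \<ge> 0"
    and params: "kv > 0" "0 < sigc" "sigc < 1" "0 < epst" "epst < 1" "0 < xi" "xi < 1"
       "0 < eta" "eta < 1" "0 < sigu" "sigu \<le> 1/2"
    and alpha0: "alpha 0 > 0"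
    and tau_m1: "tau_m1 > 0"
    \<comment> \<open>Step 1 (J_k^T c_k \<noteq> 0): the normal step conditions\<close>
    and step1: "\<And>k. transpose (J (x k)) *v c (x k) \<noteq> 0 \<Longrightarrow>
         (\<exists>y. v k = transpose (J (x k)) *v y)
       \<and> norm (v k) \<le> kv * alpha k * norm (transpose (J (x k)) *v c (x k))
       \<and> (\<exists>bc. 0 \<le> bc \<and> bc \<le> kv * alpha k
            \<and> (\<forall>b. 0 \<le> b \<and> b \<le> kv * alpha k \<longrightarrow>
                 (1/2) * (norm (c (x k) - bc *\<^sub>R (J (x k) *v (transpose (J (x k)) *v c (x k)))))^2
                 \<le> (1/2) * (norm (c (x k) - b *\<^sub>R (J (x k) *v (transpose (J (x k)) *v c (x k)))))^2)
            \<and> norm (c (x k) + J (x k) *v v k)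
                \<le> norm (c (x k) + J (x k) *v (- (bc *\<^sub>R (transpose (J (x k)) *v c (x k))))))"
    \<comment> \<open>Step 1 (J_k^T c_k = 0): v_k = 0, and no termination means c_k = 0\<close>
    and step1_zero: "\<And>k. transpose (J (x k)) *v c (x k) = 0 \<Longrightarrow> v k = 0 \<and> c (x k) = 0"
    \<comment> \<open>Step 2: u_k is the minimizer of the tangential subproblem\<close>
    and step2: "\<And>k. J (x k) *v u k = 0 \<and>
         (\<forall>w. J (x k) *v w = 0 \<longrightarrow>
            inner (g (x k)) (u k) + (norm (u k))^2 / (2 * alpha k) + r (x k + v k + u k)
            \<le> inner (g (x k)) w + (norm w)^2 / (2 * alpha k) + r (x k + v k + w))"
    \<comment> \<open>no finite termination in Step 2\<close>
    and s_nz: "\<And>k. v k + u k \<noteq> 0"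
    \<comment> \<open>Step 3: merit parameter update\<close>
    and step3: "\<And>k. tau k =
         (let tp = (if k = 0 then tau_m1 else tau (k - 1));
              T = tau_trial_val sigc (c (x k)) (J (x k)) (v k)
                    (Dval (g (x k)) r (sigu + 1/2) (alpha k) (x k) (v k + u k))
          in if ereal tp \<le> T then tp else min ((1 - epst) * tp) (real_of_ereal T))"
    \<comment> \<open>Step 4: acceptance test and step-size update\<close>
    and step4: "\<And>k. (if merit f r c (tau k) (x k + (v k + u k))
              \<le> merit f r c (tau k) (x k)
                 - eta * dq (g (x k)) r (alpha k) (x k) (c (x k)) (J (x k)) (v k + u k) (tau k)
         then x (Suc k) = x k + (v k + u k) \<and> alpha (Suc k) = alpha k
         else x (Suc k) = x k \<and> alpha (Suc k) = xi * alpha k)"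
    \<comment> \<open>Standing assumption\<close>
    and X_open: "open X" and X_convex: "convex X"
    and X_iter: "\<And>k. x k \<in> X \<and> x k + (v k + u k) \<in> X"
    and kpos: "kf > 0" "kc > 0" "kJ > 0" "kr > 0"
    and f_bdd: "bdd_below (f ` X)"
    and g_bd: "\<And>y. y \<in> X \<Longrightarrow> norm (g y) \<le> kf"
    and c_bd: "\<And>y. y \<in> X \<Longrightarrow> norm (c y) \<le> kc"
    and J_bd: "\<And>y. y \<in> X \<Longrightarrow> spec_norm (J y) \<le> kJ"
    and r_sub_bd: "\<And>y w. y \<in> X \<Longrightarrow> w \<in> subdiff r y \<Longrightarrow> norm w \<le> kr"
    and g_lip: "\<exists>L. L-lipschitz_on X g"
    and J_lip: "\<exists>L. L-lipschitz_on X J"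
    \<comment> \<open>uniform lower bound on the smallest singular value\<close>
    and smin_pos: "smin > 0"
    and smin_bd: "\<And>k. sigma_min_sv (J (x k)) \<ge> smin"
  shows "let K = 2 * kv * kJ * (kf + kr + (sigu + 1/2) * kc * kv * kJ);
             tmt = min ((1 - sigc) * kv * smin^2 / K) ((1 - sigc) * (smin / kJ)^2 / (K * alpha 0))
         in (\<forall>k. tau_trial_val sigc (c (x k)) (J (x k)) (v k)
                    (Dval (g (x k)) r (sigu + 1/2) (alpha k) (x k) (v k + u k)) \<ge> ereal tmt)
          \<and> (\<forall>k. tau k \<ge> min (tau 0) ((1 - epst) * tmt))"
  proof -
  define sb where "sb = sigu + 1/2"
  have sb: "sb > 0" "sb \<le> 1" using params unfolding sb_def by auto
  have alk: "0 < alpha k \<and> alpha k \<le> alpha 0" for k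
  proof (induction k)
    case 0 then show ?case using alpha0 by simp
  next
    case (Suc k)
    show ?case
    proof (cases "merit f r c (tau k) (x k + (v k + u k))
              \<le> merit f r c (tau k) (x k)
                 - eta * dq (g (x k)) r (alpha k) (x k) (c (x k)) (J (x k)) (v k + u k) (tau k)")
      case True then show ?thesis using step4[of k] Suc by simp
    next
      case False
      then have "alpha (Suc k) = xi * alpha k" using step4[of k] by simp
      moreover have "xi * alpha k \<le> alpha k" using Suc params by (simp add: mult_left_le_one_le)
      moreover have "xi * alpha k > 0" using Suc params by simp
      ultimately show ?thesis using Suc by linarith
    qed
  qed
  have Jb: "norm (J (x k) *v h) \<le> kJ * norm h" for k h
  proof -
    have "norm (J (x k) *v h) \<le> onorm ((*v) (J (x k))) * norm h"
      by (rule onorm[OF matrix_vector_mul_bounded_linear])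
    also have "\<dots> \<le> kJ * norm h"
      using J_bd[of "x k"] X_iter[of k] unfolding spec_norm_def by (intro mult_right_mono) auto
    finally show ?thesis .
  qed
  have JTup: "norm (transpose (J (x k)) *v y) \<le> kJ * norm y" for k y
  proof -
    define z where "z = transpose (J (x k)) *v y"
    have "(norm z)^2 = inner y (J (x k) *v z)"
      unfolding z_def power2_norm_eq_inner by (rule transp_inner)
    also have "\<dots> \<le> norm y * norm (J (x k) *v z)" by (rule norm_cauchy_schwarz)
    also have "\<dots> \<le> norm y * (kJ * norm z)" by (intro mult_left_mono Jb) auto
    finally have h: "norm z * norm z \<le> (kJ * norm y) * norm z" by (simp add: power2_eq_square algebra_simps)
    show ?thesis
    proof (cases "norm z = 0")
      case True then show ?thesis unfolding z_def using kpos by simp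
    next
      case False then have "norm z > 0" by simp
      then show ?thesis using h unfolding z_def by simp
    qed
  qed
  have JTlow: "smin * norm y \<le> norm (transpose (J (x k)) *v y)" for k y
  proof (cases "y = 0")
    case True then show ?thesis by simp
  next
    case False
    define y1 where "y1 = (1 / norm y) *\<^sub>R y"
    have n1: "norm y1 = 1" using False unfolding y1_def by simp
    have "sigma_min_sv (J (x k)) \<le> norm (transpose (J (x k)) *v y1)"
      unfolding sigma_min_sv_def
      by (rule cInf_lower) (use n1 in \<open>auto intro: bdd_belowI[of _ 0]\<close>)
    also have "\<dots> = norm (transpose (J (x k)) *v y) / norm y"
      unfolding y1_def by (simp add: matrix_vector_mult_scaleR)
    finally have "smin \<le> norm (transpose (J (x k)) *v y) / norm y" using smin_bd[of k] by simp
    then show ?thesis using False by (simp add: pos_le_divide_eq mult.commute)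
  qed
  have smkJ: "smin \<le> kJ"
  proof -
    obtain i :: 'm where True by blast
    have "smin * norm (axis i (1::real)) \<le> kJ * norm (axis i (1::real))"
      using JTlow[of "axis i 1" 0] JTup[of 0 "axis i 1"] by linarith
    then show ?thesis by simp
  qed
  define K where "K = 2 * kv * kJ * (kf + kr + (sigu + 1/2) * kc * kv * kJ)"
  define tmt where "tmt = min ((1 - sigc) * kv * smin^2 / K) ((1 - sigc) * (smin / kJ)^2 / (K * alpha 0))"
  define Tv where "Tv k = tau_trial_val sigc (c (x k)) (J (x k)) (v k)
                    (Dval (g (x k)) r (sigu + 1/2) (alpha k) (x k) (v k + u k))" for k
  have Kp: "K > 0" unfolding K_def using kpos params by (simp add: add_pos_pos)
  have tmtp: "tmt > 0" unfolding tmt_def using Kp params smin_pos kpos alpha0 by simp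
  have Tb: "Tv k \<ge> ereal tmt" for k
  proof -
    define D where "D = Dval (g (x k)) r (sigu + 1/2) (alpha k) (x k) (v k + u k)"
    have Tv_eq: "Tv k = tau_trial_val sigc (c (x k)) (J (x k)) (v k) D" unfolding Tv_def D_def ..
    obtain y0 where vr: "v k = transpose (J (x k)) *v y0"
    proof (cases "transpose (J (x k)) *v c (x k) = 0")
      case True then have "v k = transpose (J (x k)) *v 0" using step1_zero[of k] by simp
      then show ?thesis using that by blast
    next
      case False then show ?thesis using step1[of k] that by blast
    qed
    have D1: "D \<le> inner (g (x k)) (v k) + kr * norm (v k) + sb * (norm (v k))^2 / alpha k"
    proof -
      have pX: "x k + (v k + u k) \<in> X" using X_iter[of k] by blast
      have al: "alpha k > 0" using alk[of k] by blast
      have sb1: "sigu + 1/2 \<le> 1" using params by simp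
      show ?thesis unfolding D_def sb_def
        by (rule Dbound[OF r_convex X_open pX al sb1 r_sub_bd vr conjunct1[OF step2[of k]] conjunct2[OF step2[of k]]])
    qed
    have "inner (g (x k)) (v k) \<le> kf * norm (v k)"
      using norm_cauchy_schwarz[of "g (x k)" "v k"] g_bd[of "x k"] X_iter[of k]
      by (meson mult_right_mono norm_ge_zero order_trans)
    then have D2: "D \<le> (kf + kr) * norm (v k) + sb * (norm (v k))^2 / alpha k"
      using D1 by (simp add: algebra_simps)
    show ?thesis
    proof (cases "D \<le> 0")
      case True then show ?thesis unfolding Tv_eq tau_trial_val_def by simp
    next
      case Dp: False
      have jc: "transpose (J (x k)) *v c (x k) \<noteq> 0"
      proof
        assume "transpose (J (x k)) *v c (x k) = 0"
        then have "v k = 0" using step1_zero[of k] by simp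
        then show False using D2 Dp by simp
      qed
      obtain bc where st: "norm (v k) \<le> kv * alpha k * norm (transpose (J (x k)) *v c (x k))"
        "0 \<le> bc" "bc \<le> kv * alpha k"
        "\<forall>b. 0 \<le> b \<and> b \<le> kv * alpha k \<longrightarrow>
                 (1/2) * (norm (c (x k) - bc *\<^sub>R (J (x k) *v (transpose (J (x k)) *v c (x k)))))^2
                 \<le> (1/2) * (norm (c (x k) - b *\<^sub>R (J (x k) *v (transpose (J (x k)) *v c (x k)))))^2"
        "norm (c (x k) + J (x k) *v v k)
                \<le> norm (c (x k) + J (x k) *v (- (bc *\<^sub>R (transpose (J (x k)) *v c (x k)))))"
        using step1[OF jc] by blast
      have N: "norm (c (x k)) - norm (c (x k) + J (x k) *v v k) \<ge>
          (norm (transpose (J (x k)) *v c (x k)))^2 * min (1/kJ^2) (kv * alpha k) / (2 * norm (c (x k)))"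
        by (rule Nbound[OF jc Jb _ _ st(2) st(3) st(4) st(5)]) (use kpos params alk[of k] in auto)
      have cnz: "c (x k) \<noteq> 0" using jc by auto
      have a1: "norm (transpose (J (x k)) *v c (x k)) \<le> kJ * kc"
        using JTup[of k "c (x k)"] c_bd[of "x k"] X_iter[of k] kpos
        by (meson mult_left_mono less_imp_le order_trans)
      have "(1 - sigc) * (norm (c (x k)) - norm (c (x k) + J (x k) *v v k)) / D \<ge> tmt"
        unfolding tmt_def K_def
        by (rule Tarith[OF kpos(1) kpos(4) params(1) kpos(3) kpos(2) _ params(2) params(3) smin_pos smkJ
              _ _ _ _ JTlow a1 _ st(1) _ _ N])
           (use params in simp, use alk[of k] in simp, use alk[of k] in simp, use jc in simp,
            use cnz in simp, simp, use D2 in \<open>simp add: sb_def\<close>, use Dp in simp)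
      then show ?thesis unfolding Tv_eq tau_trial_val_def using Dp by simp
    qed
  qed
  have taub: "tau k \<ge> min (tau 0) ((1 - epst) * tmt)" for k
  proof (induction k)
    case 0 then show ?case by simp
  next
    case (Suc j)
    have eq: "tau (Suc j) = (if ereal (tau j) \<le> Tv (Suc j) then tau j
               else min ((1 - epst) * tau j) (real_of_ereal (Tv (Suc j))))"
      using step3[of "Suc j"] unfolding Let_def Tv_def by simp
    show ?case
    proof (cases "ereal (tau j) \<le> Tv (Suc j)")
      case True then show ?thesis using eq Suc by simp
    next
      case False
      have lo: "ereal tmt \<le> Tv (Suc j)" by (rule Tb)
      then obtain t where t: "Tv (Suc j) = ereal t"
        using False by (cases "Tv (Suc j)") auto
      have tt: "tmt \<le> t" "t < tau j" using lo False t by auto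
      have "(1 - epst) * tmt \<le> (1 - epst) * tau j" using tt params by (intro mult_left_mono) auto
      moreover have "(1 - epst) * tmt \<le> t"
      proof -
        have "(1 - epst) * tmt \<le> tmt" using tmtp params by (intro mult_left_le_one_le) auto
        then show ?thesis using tt by linarith
      qed
      ultimately have "min (tau 0) ((1 - epst) * tmt) \<le> min ((1 - epst) * tau j) t"
        by (simp add: min.coboundedI2)
      then show ?thesis using eq False t by simp
    qed
  qed
  have fin: "(\<forall>k. tau_trial_val sigc (c (x k)) (J (x k)) (v k)
                    (Dval (g (x k)) r (sigu + 1/2) (alpha k) (x k) (v k + u k)) \<ge> ereal tmt)
          \<and> (\<forall>k. tau k \<ge> min (tau 0) ((1 - epst) * tmt))"
    using Tb taub unfolding Tv_def by blast
  show ?thesis using fin unfolding Let_def tmt_def K_def .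
qed

end
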